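(* Let $n\ge 1$ and $G\in\mathcal{G}_{2n}$ with $F(G)=n-1$. Then the forcing spectrum of $G$ is continuous, i.e. $\{f(G,M): M \text{ a perfect matching of } G\}=\{f(G), f(G)+1,\dots, n-1\}$.
   Context: All graphs are finite and simple. $\mathcal{G}_{2n}$ denotes the set of all graphs with $2n$ vertices that have a perfect matching. For a perfect matching $M$ of $G$, a forcing set of $M$ is a subset $S\subseteq M$ contained in no other perfect matching of $G$; $f(G,M)$ is the minimum size of a forcing set of $M$. $f(G)$ and $F(G)$ are the minimum and maximum of $f(G,M)$ over all perfect matchings $M$ of $G$. The forcing spectrum of $G$ is the set of forcing numbers of all perfect matchings of $G$; it is continuous if it is an integer interval. *)

theory Defs
  imports Main
begin

definition simple_graph :: "'a set \<Rightarrow> 'a set set \<Rightarrow> bool" where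
  "simple_graph V E \<longleftrightarrow> finite V \<and> (\<forall>e\<in>E. e \<subseteq> V \<and> card e = 2)"

definition perfect_matching :: "'a set \<Rightarrow> 'a set set \<Rightarrow> 'a set set \<Rightarrow> bool" where
  "perfect_matching V E M \<longleftrightarrow> M \<subseteq> E \<and> (\<forall>v\<in>V. \<exists>!e. e \<in> M \<and> v \<in> e)"

definition forcing_set :: "'a set \<Rightarrow> 'a set set \<Rightarrow> 'a set set \<Rightarrow> 'a set set \<Rightarrow> bool" where
  "forcing_set V E M S \<longleftrightarrow> S \<subseteq> M \<and>
     (\<forall>M'. perfect_matching V E M' \<and> S \<subseteq> M' \<longrightarrow> M' = M)"

definition forcing_number :: "'a set \<Rightarrow> 'a set set \<Rightarrow> 'a set set \<Rightarrow> nat" where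
  "forcing_number V E M = Min (card ` {S. forcing_set V E M S})"

definition forcing_spectrum :: "'a set \<Rightarrow> 'a set set \<Rightarrow> nat set" where
  "forcing_spectrum V E = forcing_number V E ` {M. perfect_matching V E M}"

definition min_forcing_number :: "'a set \<Rightarrow> 'a set set \<Rightarrow> nat" where
  "min_forcing_number V E = Min (forcing_spectrum V E)"

definition max_forcing_number :: "'a set \<Rightarrow> 'a set set \<Rightarrow> nat" where
  "max_forcing_number V E = Max (forcing_spectrum V E)"

end

theory Submission
  imports Defs
begin



definition pm :: "'a set set \<Rightarrow> 'a set \<Rightarrow> 'a set set \<Rightarrow> bool" where
  "pm E W M \<longleftrightarrow> M \<subseteq> E \<and> (\<forall>x\<in>M. x \<subseteq> W) \<and> (\<forall>v\<in>W. \<exists>!x. x \<in> M \<and> v \<in> x)"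

definition swap :: "'a set set \<Rightarrow> 'a set set \<Rightarrow> 'a set set \<Rightarrow> bool" where
  "swap E M M' \<longleftrightarrow> (\<exists>a b c d. a\<noteq>b \<and> a\<noteq>c \<and> a\<noteq>d \<and> b\<noteq>c \<and> b\<noteq>d \<and> c\<noteq>d \<and>
     {a,b}\<in>M \<and> {c,d}\<in>M \<and> {a,c}\<in>E \<and> {b,d}\<in>E \<and> M' = M - {{a,b},{c,d}} \<union> {{a,c},{b,d}})"

definition PP :: "'a set set \<Rightarrow> 'a set set \<Rightarrow> bool" where
  "PP E M0 \<longleftrightarrow> (\<forall>a b c d. {a,b}\<in>M0 \<longrightarrow> {c,d}\<in>M0 \<longrightarrow> a\<noteq>c \<longrightarrow> a\<noteq>d \<longrightarrow> b\<noteq>c \<longrightarrow> b\<noteq>d \<longrightarrow>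
      ({a,c}\<in>E \<and> {b,d}\<in>E) \<or> ({a,d}\<in>E \<and> {b,c}\<in>E))"

definition partner :: "'a set set \<Rightarrow> 'a \<Rightarrow> 'a" where
  "partner M v = (THE y. {v,y} \<in> M)"

locale G = fixes E :: "'a set set" assumes E2: "\<forall>x\<in>E. card x = 2"
begin

lemma pm_edge: assumes "pm E W M" "x \<in> M" shows "\<exists>a b. a\<noteq>b \<and> x = {a,b}"
  using assms E2 unfolding pm_def by (metis card_2_iff subsetD)

lemma pm_unique: assumes "pm E W M" "x\<in>M" "y\<in>M" "v\<in>x" "v\<in>y" shows "x = y"
  using assms unfolding pm_def by blast

lemma pm_in: assumes "pm E W M" "x \<in> M" "v \<in> x" shows "v \<in> W"
  using assms unfolding pm_def by blast

lemma pm_ex: assumes "pm E W M" "v \<in> W" shows "\<exists>y. y \<noteq> v \<and> {v,y} \<in> M"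
proof -
  obtain x where x: "x \<in> M" "v \<in> x" using assms unfolding pm_def by blast
  obtain a b where ab: "a\<noteq>b" "x = {a,b}" using pm_edge[OF assms(1) x(1)] by blast
  show ?thesis using x ab by (metis insert_commute insertE singletonD)
qed

lemma pm_partner_eq: assumes "pm E W M" "{v,y} \<in> M" shows "partner M v = y"
proof -
  have uniq: "z = y" if "{v,z} \<in> M" for z
  proof -
    have "{v,z} = {v,y}" using pm_unique[OF assms(1) that assms(2)] by blast
    moreover have "z \<noteq> v" using pm_edge[OF assms(1) that] by (metis doubleton_eq_iff insert_absorb2)
    ultimately show ?thesis by (metis doubleton_eq_iff)
  qed
  show ?thesis unfolding partner_def using uniq assms(2) by (rule the_equality[rotated]) 
qed

lemma pm_partner: assumes "pm E W M" "v \<in> W"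
  shows "{v, partner M v} \<in> M" "partner M v \<noteq> v" "partner M v \<in> W"
    "partner M (partner M v) = v"
proof -
  obtain y where y: "y \<noteq> v" "{v,y} \<in> M" using pm_ex[OF assms] by blast
  have py: "partner M v = y" using pm_partner_eq[OF assms(1) y(2)] .
  show "{v, partner M v} \<in> M" "partner M v \<noteq> v" using y py by auto
  show "partner M v \<in> W" using y py pm_in[OF assms(1) y(2)] by auto
  have "{y,v} \<in> M" using y by (simp add: insert_commute)
  then show "partner M (partner M v) = v" using py pm_partner_eq[OF assms(1)] by auto
qed


lemma swapI: assumes "a\<noteq>b" "a\<noteq>c" "a\<noteq>d" "b\<noteq>c" "b\<noteq>d" "c\<noteq>d"
    "{a,b}\<in>M" "{c,d}\<in>M" "{a,c}\<in>E" "{b,d}\<in>E" "M' = M - {{a,b},{c,d}} \<union> {{a,c},{b,d}}"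
  shows "swap E M M'"
  unfolding swap_def using assms by blast

lemma swap_pm: assumes pm: "pm E W M" and sw: "swap E M M'" shows "pm E W M'"
proof -
  obtain a b c d where d: "a\<noteq>b" "a\<noteq>c" "a\<noteq>d" "b\<noteq>c" "b\<noteq>d" "c\<noteq>d"
    and m: "{a,b}\<in>M" "{c,d}\<in>M" and e: "{a,c}\<in>E" "{b,d}\<in>E"
    and M': "M' = M - {{a,b},{c,d}} \<union> {{a,c},{b,d}}" using sw unfolding swap_def by blast
  have W: "a \<in> W" "b \<in> W" "c \<in> W" "d \<in> W" using pm_in[OF pm m(1)] pm_in[OF pm m(2)] by auto
  have sub: "M' \<subseteq> E" using pm e M' unfolding pm_def by auto
  have sW: "\<forall>x\<in>M'. x \<subseteq> W" using pm W M' unfolding pm_def by auto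
  have un: "\<exists>!x. x \<in> M' \<and> v \<in> x" if v: "v \<in> W" for v
  proof (cases "v \<in> {a,b,c,d}")
    case True
    have other: "\<And>x. x \<in> M \<Longrightarrow> v \<in> x \<Longrightarrow> x = {a,b} \<or> x = {c,d}"
      using True pm_unique[OF pm _ m(1)] pm_unique[OF pm _ m(2)] by blast
    show ?thesis
    proof (rule ex_ex1I)
      show "\<exists>x. x \<in> M' \<and> v \<in> x" using True M' by auto
    next
      fix x y assume "x \<in> M' \<and> v \<in> x" "y \<in> M' \<and> v \<in> y"
      then have xy: "x \<in> M'" "v \<in> x" "y \<in> M'" "v \<in> y" by auto
      have "x \<in> {{a,c},{b,d}}" using xy(1,2) other M' by blast
      moreover have "y \<in> {{a,c},{b,d}}" using xy(3,4) other M' by blast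
      ultimately show "x = y" using xy(2,4) d by auto
    qed
  next
    case False
    obtain x where x: "x\<in>M" "v\<in>x" using pm v unfolding pm_def by blast
    have "x \<noteq> {a,b}" "x \<noteq> {c,d}" using x False by auto
    then have "x \<in> M'" using x M' by auto
    show ?thesis
    proof (rule ex1I[of _ x])
      show "x \<in> M' \<and> v \<in> x" using \<open>x \<in> M'\<close> x by auto
    next
      fix y assume "y \<in> M' \<and> v \<in> y"
      then show "y = x" using M' False pm_unique[OF pm _ x(1) _ x(2)] by auto
    qed
  qed
  show ?thesis unfolding pm_def using sub sW un by simp
qed

lemma swap_sym: assumes pm: "pm E W M" and sw: "swap E M M'" shows "swap E M' M"
proof -
  obtain a b c d where d: "a\<noteq>b" "a\<noteq>c" "a\<noteq>d" "b\<noteq>c" "b\<noteq>d" "c\<noteq>d"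
    and m: "{a,b}\<in>M" "{c,d}\<in>M" and e: "{a,c}\<in>E" "{b,d}\<in>E"
    and M': "M' = M - {{a,b},{c,d}} \<union> {{a,c},{b,d}}" using sw unfolding swap_def by blast
  have n1: "{a,c} \<notin> M" using pm_unique[OF pm _ m(1), of "{a,c}" a] d by (auto simp: doubleton_eq_iff)
  have n2: "{b,d} \<notin> M" using pm_unique[OF pm _ m(1), of "{b,d}" b] d by (auto simp: doubleton_eq_iff)
  have eE: "{a,b}\<in>E" "{c,d}\<in>E" using pm m unfolding pm_def by auto
  have eq: "M = M' - {{a,c},{b,d}} \<union> {{a,b},{c,d}}"
    using M' n1 n2 m d by (auto simp: doubleton_eq_iff)
  show ?thesis
    by (rule swapI[of a c b d]) (use d M' eE eq in auto)
qed

lemma swaps_pm: assumes "(swap E)\<^sup>*\<^sup>* M M'" "pm E W M" shows "pm E W M'"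
  using assms(1)
proof (induction rule: rtranclp_induct)
  case base then show ?case using assms(2) .
next
  case (step y z) then show ?case using swap_pm by blast
qed

lemma swap_lift: assumes "swap E A A'" "\<forall>x\<in>A. x \<inter> e = {}" "e \<noteq> {}"
  shows "swap E (insert e A) (insert e A') \<and> (\<forall>x\<in>A'. x \<inter> e = {})"
proof -
  obtain a b c d where d: "a\<noteq>b" "a\<noteq>c" "a\<noteq>d" "b\<noteq>c" "b\<noteq>d" "c\<noteq>d"
    and m: "{a,b}\<in>A" "{c,d}\<in>A" and ee: "{a,c}\<in>E" "{b,d}\<in>E"
    and M': "A' = A - {{a,b},{c,d}} \<union> {{a,c},{b,d}}" using assms(1) unfolding swap_def by blast
  have dis: "a \<notin> e" "b \<notin> e" "c \<notin> e" "d \<notin> e" using assms(2) m by auto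
  have "e \<noteq> {a,b}" "e \<noteq> {c,d}" using assms(3) dis by auto
  then have eq: "insert e A' = insert e A - {{a,b},{c,d}} \<union> {{a,c},{b,d}}" using M' by auto
  have "swap E (insert e A) (insert e A')"
    by (rule swapI[OF d]) (use m ee eq in auto)
  moreover have "\<forall>x\<in>A'. x \<inter> e = {}" using M' assms(2) dis by auto
  ultimately show ?thesis by blast
qed

lemma swaps_lift: assumes "(swap E)\<^sup>*\<^sup>* A A'" "\<forall>x\<in>A. x \<inter> e = {}" "e \<noteq> {}"
  shows "(swap E)\<^sup>*\<^sup>* (insert e A) (insert e A')"
proof -
  have "(swap E)\<^sup>*\<^sup>* (insert e A) (insert e A') \<and> (\<forall>x\<in>A'. x \<inter> e = {})"
    using assms(1)
  proof (induction rule: rtranclp_induct)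
    case base then show ?case using assms(2) by auto
  next
    case (step y z)
    then show ?case using swap_lift[of y z e] assms(3)
      by (meson rtranclp.rtrancl_into_rtrancl)
  qed
  then show ?thesis by blast
qed

end



context G begin

lemma pm_iff: assumes "\<forall>x\<in>E. x \<subseteq> V" shows "perfect_matching V E M = pm E V M"
  using assms unfolding perfect_matching_def pm_def by blast

lemma pm_sub_eq: assumes "pm E V M" "pm E V N" "M \<subseteq> N" shows "N = M"
proof
  show "N \<subseteq> M"
  proof
    fix x assume x: "x \<in> N"
    obtain a b where ab: "a \<noteq> b" "x = {a,b}" using pm_edge[OF assms(2) x] by blast
    have "a \<in> V" using pm_in[OF assms(2) x] ab by auto
    then obtain y where y: "y \<in> M" "a \<in> y" using assms(1) unfolding pm_def by blast
    have "y = x" using pm_unique[OF assms(2), of y x a] y x ab assms(3) by auto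
    then show "x \<in> M" using y by simp
  qed
qed (use assms in simp)

end

locale GV = G + fixes V assumes Esub: "\<forall>x\<in>E. x \<subseteq> V" and finV: "finite V"
begin

abbreviation fn where "fn M \<equiv> forcing_number V E M"

lemma finM: "pm E V M \<Longrightarrow> finite M"
  using finV Esub unfolding pm_def by (meson Pow_iff finite_Pow_iff rev_finite_subset subsetI subset_iff)

lemma fs_self: "pm E V M \<Longrightarrow> forcing_set V E M M"
  unfolding forcing_set_def using pm_sub_eq pm_iff[OF Esub] by blast

lemma fin_cards: "pm E V M \<Longrightarrow> finite (card ` {S. forcing_set V E M S})"
proof -
  assume "pm E V M"
  then have "{S. forcing_set V E M S} \<subseteq> Pow M" unfolding forcing_set_def by auto
  then show ?thesis using finM[OF \<open>pm E V M\<close>] by (meson finite_Pow_iff finite_imageI rev_finite_subset)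
qed

lemma fn_le: "pm E V M \<Longrightarrow> forcing_set V E M S \<Longrightarrow> fn M \<le> card S"
  unfolding forcing_number_def using fin_cards by (simp add: Min_le)

lemma fn_ex: "pm E V M \<Longrightarrow> \<exists>S. forcing_set V E M S \<and> card S = fn M"
proof -
  assume a: "pm E V M"
  have "fn M \<in> card ` {S. forcing_set V E M S}" unfolding forcing_number_def
    using fin_cards[OF a] fs_self[OF a] by (intro Min_in) auto
  then show ?thesis by auto
qed

lemma swap_fn: assumes pm: "pm E V M" and sw: "swap E M M'" shows "fn M' \<le> fn M + 1"
proof -
  obtain a b c d where d: "a\<noteq>b" "a\<noteq>c" "a\<noteq>d" "b\<noteq>c" "b\<noteq>d" "c\<noteq>d"
    and m: "{a,b}\<in>M" "{c,d}\<in>M" and e: "{a,c}\<in>E" "{b,d}\<in>E"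
    and M': "M' = M - {{a,b},{c,d}} \<union> {{a,c},{b,d}}" using sw unfolding swap_def by blast
  have n1: "{a,c} \<notin> M" using pm_unique[OF pm _ m(1), of "{a,c}" a] d by (auto simp: doubleton_eq_iff)
  have n2: "{b,d} \<notin> M" using pm_unique[OF pm _ m(1), of "{b,d}" b] d by (auto simp: doubleton_eq_iff)
  have pm': "pm E V M'" using swap_pm[OF pm sw] .
  obtain S where S: "forcing_set V E M S" "card S = fn M" using fn_ex[OF pm] by blast
  have SM: "S \<subseteq> M" using S unfolding forcing_set_def by auto
  have hit: "{a,b} \<in> S \<or> {c,d} \<in> S"
  proof (rule ccontr)
    assume "\<not> ?thesis"
    then have "S \<subseteq> M'" using SM M' by auto
    then have "M' = M" using S pm' pm_iff[OF Esub] unfolding forcing_set_def by blast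
    then show False using M' n1 by auto
  qed
  define S' where "S' = S - {{a,b},{c,d}} \<union> {{a,c},{b,d}}"
  have finS: "finite S" using SM finM[OF pm] finite_subset by blast
  have c1: "card (S - {{a,b},{c,d}}) + 1 \<le> card S"
  proof -
    have "S - {{a,b},{c,d}} \<subset> S" using hit by auto
    then have "card (S - {{a,b},{c,d}}) < card S" using finS by (simp add: psubset_card_mono)
    then show ?thesis by simp
  qed
  have "card S' \<le> card (S - {{a,b},{c,d}}) + card {{a,c},{b,d}}"
    unfolding S'_def by (rule card_Un_le)
  moreover have "card {{a,c},{b,d}} \<le> 2" by (simp add: card_insert_le_m1)
  ultimately have cS': "card S' \<le> fn M + 1" using c1 S(2) by linarith
  have fS': "forcing_set V E M' S'"
    unfolding forcing_set_def
  proof (intro conjI allI impI)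
    show "S' \<subseteq> M'" unfolding S'_def M' using SM by auto
  next
    fix N assume "perfect_matching V E N \<and> S' \<subseteq> N"
    then have pmN: "pm E V N" and SN: "S' \<subseteq> N" using pm_iff[OF Esub] by auto
    have acN: "{a,c} \<in> N" "{b,d} \<in> N" using SN unfolding S'_def by auto
    define N'' where "N'' = N - {{a,c},{b,d}} \<union> {{a,b},{c,d}}"
    have eE: "{a,b}\<in>E" "{c,d}\<in>E" using pm m unfolding pm_def by auto
    have swN: "swap E N N''"
      by (rule swapI[of a c b d]) (use d acN eE N''_def in auto)
    have pmN'': "pm E V N''" using swap_pm[OF pmN swN] .
    have "S \<subseteq> N''"
    proof
      fix s assume s: "s \<in> S"
      show "s \<in> N''"
      proof (cases "s \<in> {{a,b},{c,d}}")
        case True then show ?thesis unfolding N''_def by auto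
      next
        case False
        have "s \<noteq> {a,c}" "s \<noteq> {b,d}" using s SM n1 n2 by auto
        then show ?thesis using False s SN unfolding N''_def S'_def by auto
      qed
    qed
    then have NM: "N'' = M" using S pmN'' pm_iff[OF Esub] unfolding forcing_set_def by blast
    have n3: "{a,b} \<notin> N" using pm_unique[OF pmN _ acN(1), of "{a,b}" a] d by (auto simp: doubleton_eq_iff)
    have n4: "{c,d} \<notin> N" using pm_unique[OF pmN _ acN(1), of "{c,d}" c] d by (auto simp: doubleton_eq_iff)
    have "N = N'' - {{a,b},{c,d}} \<union> {{a,c},{b,d}}"
      unfolding N''_def using n3 n4 acN d by (auto simp: doubleton_eq_iff)
    then show "N = M'" using NM M' by simp
  qed
  show ?thesis using fn_le[OF pm' fS'] cS' by linarith
qed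

end



locale K = G + fixes W M M0 u0
  assumes pmM: "pm E W M" and pmM0: "pm E W M0" and disj: "M \<inter> M0 = {}"
    and PPM0: "PP E M0" and u0W: "u0 \<in> W"
begin

abbreviation p where "p \<equiv> partner M"
abbreviation q where "q \<equiv> partner M0"

definition uu :: "nat \<Rightarrow> 'a" where "uu j = ((p \<circ> q) ^^ j) u0"
definition ww :: "nat \<Rightarrow> 'a" where "ww j = q (uu j)"

lemma uS: "uu (j+1) = p (ww j)" unfolding uu_def ww_def by simp

lemma uW: "uu j \<in> W"
proof (induction j)
  case 0 then show ?case using u0W by (simp add: uu_def)
next
  case (Suc j)
  have "ww j \<in> W" unfolding ww_def using pm_partner(3)[OF pmM0 Suc] .
  then show ?case using uS[of j] pm_partner(3)[OF pmM] by simp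
qed

lemma wW: "ww j \<in> W" unfolding ww_def using pm_partner(3)[OF pmM0 uW] .

lemma eM0: "{uu j, ww j} \<in> M0" unfolding ww_def using pm_partner(1)[OF pmM0 uW] .
lemma eM: "{ww j, uu (j+1)} \<in> M" unfolding uS using pm_partner(1)[OF pmM wW] .
lemma eM': "{uu (j+1), ww j} \<in> M" using eM by (simp add: insert_commute)
lemma eM0': "{ww j, uu j} \<in> M0" using eM0 by (simp add: insert_commute)

lemma M0E: "x \<in> M0 \<Longrightarrow> x \<in> E" using pmM0 unfolding pm_def by auto
lemma ME: "x \<in> M \<Longrightarrow> x \<in> E" using pmM unfolding pm_def by auto

lemma pw: "p (ww j) = uu (j+1)" using uS by simp
lemma pu: "p (uu (j+1)) = ww j" using pm_partner_eq[OF pmM eM'] .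
lemma qu: "q (uu j) = ww j" by (simp add: ww_def)
lemma qw: "q (ww j) = uu j" using pm_partner_eq[OF pmM0 eM0'] .
lemma pq: "v \<in> W \<Longrightarrow> p v \<noteq> q v"
  using pm_partner(1)[OF pmM, of v] pm_partner(1)[OF pmM0, of v] disj by auto

lemma g1: "uu j \<noteq> ww j" unfolding ww_def using pm_partner(2)[OF pmM0 uW] by metis
lemma g2: "ww j \<noteq> uu (j+1)" using pm_partner(2)[OF pmM wW] pw by metis
lemma g3: "uu j \<noteq> uu (j+1)"
proof
  assume "uu j = uu (j+1)"
  then have "p (ww j) = q (ww j)" using pw qw by metis
  then show False using pq wW by blast
qed
lemma g4: "ww j \<noteq> ww (j+1)" using g3 qw by metis
lemma g5: "uu j \<noteq> ww (j+1)"
proof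
  assume "uu j = ww (j+1)"
  then have "q (uu j) = uu (j+1)" using qw by metis
  then show False using g2 qu by metis
qed
lemma g6: "ww j \<noteq> uu (j+2)"
proof
  assume "ww j = uu (j+2)"
  then have "p (ww j) = p (uu (j+1+1))" by simp
  then have "uu (j+1) = ww (j+1)" using pw pu by metis
  then show False using g1 by metis
qed

lemma eMi: "i = j+1 \<Longrightarrow> {ww j, uu i} \<in> M" using eM by simp
lemma eMi': "i = j+1 \<Longrightarrow> {uu i, ww j} \<in> M" using eM' by simp
lemma pui: "i = j+1 \<Longrightarrow> p (uu i) = ww j" using pu by simp
lemma g2i: "i = j+1 \<Longrightarrow> ww j \<noteq> uu i" using g2 by simp
lemma g3i: "i = j+1 \<Longrightarrow> uu j \<noteq> uu i" using g3 by simp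
lemma g4i: "i = j+1 \<Longrightarrow> ww j \<noteq> ww i" using g4 by simp
lemma g5i: "i = j+1 \<Longrightarrow> uu j \<noteq> ww i" using g5 by simp
lemma g6i: "i = j+2 \<Longrightarrow> ww j \<noteq> uu i" using g6 by simp

abbreviation goal where "goal \<equiv> \<exists>M'. (swap E)\<^sup>*\<^sup>* M M' \<and> M' \<inter> M0 \<noteq> {}"

lemma CA: assumes "{ww j, uu (j+2)} \<in> E" shows goal
proof -
  define M1 where "M1 = M - {{ww j, uu (j+1)}, {uu (j+2), ww (j+1)}} \<union> {{ww j, uu (j+2)}, {uu (j+1), ww (j+1)}}"
  have s: "swap E M M1"
    apply (rule swapI[of "ww j" "uu (j+1)" "uu (j+2)" "ww (j+1)"])
    using g1[of "j+1"] g2i[of "j+1" "j"] g2i[of "j+2" "j+1"] g3i[of "j+2" "j+1"] g4i[of "j+1" "j"] g6i[of "j+2" "j"] eMi[of "j+1" "j"] eMi'[of "j+2" "j+1"]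
      assms M0E[OF eM0[of "j+1"]] M1_def by (auto simp: add.assoc)
  have "M1 \<inter> M0 \<noteq> {}" using eM0[of "j+1"] M1_def by auto
  then show goal using s by blast
qed


lemma CB: assumes h1: "{ww j, ww (j+1)} \<in> E" and h2: "{ww j, ww (j+2)} \<in> E"
  and h3: "{uu (j+1), uu (j+3)} \<in> E" and h4: "ww j \<noteq> ww (j+2)" and h5: "uu (j+1) \<noteq> uu (j+3)"
  shows goal
proof -
  have d1: "uu (j+1) \<noteq> ww (j+2)" using g5i[of "j+2" "j+1"] by simp
  have d2: "ww j \<noteq> uu (j+3)"
  proof
    assume "ww j = uu (j+3)"
    then have "p (ww j) = p (uu (j+3))" by simp
    moreover have "p (uu (j+3)) = ww (j+2)" using pui[of "j+3" "j+2"] by simp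
    ultimately show False using pw d1 by metis
  qed
  have d3: "ww (j+2) \<noteq> uu (j+3)" using g2i[of "j+3" "j+2"] by simp
  have d4: "ww (j+1) \<noteq> ww (j+2)" using g4i[of "j+2" "j+1"] by simp
  have d5: "ww (j+1) \<noteq> uu (j+3)" using g6i[of "j+3" "j+1"] by simp
  have d6: "uu (j+2) \<noteq> ww (j+2)" using g1[of "j+2"] by simp
  have d7: "ww (j+1) \<noteq> uu (j+2)" using g2i[of "j+2" "j+1"] by simp
  have d8: "ww j \<noteq> uu (j+2)" using g6i[of "j+2" "j"] by simp
  have m1: "{ww j, uu (j+1)} \<in> M" using eMi[of "j+1" "j"] by simp
  have m2: "{ww (j+2), uu (j+3)} \<in> M" using eMi[of "j+3" "j+2"] by simp
  have m3: "{uu (j+2), ww (j+1)} \<in> M" using eMi'[of "j+2" "j+1"] by simp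
  have e0: "{ww (j+2), uu (j+2)} \<in> M0" using eM0'[of "j+2"] by simp
  define M1 where "M1 = M - {{ww j, uu (j+1)}, {ww (j+2), uu (j+3)}} \<union> {{ww j, ww (j+2)}, {uu (j+1), uu (j+3)}}"
  have s1: "swap E M M1"
    by (rule swapI[of "ww j" "uu (j+1)" "ww (j+2)" "uu (j+3)"])
       (use g2i[of "j+1" "j"] h4 d2 d1 h5 d3 m1 m2 h2 h3 M1_def in auto)
  have m4: "{uu (j+2), ww (j+1)} \<in> M1" unfolding M1_def using m3 g4i[of "j+1" "j"] g1[of "j+1"] d4 d5
    by (auto simp: doubleton_eq_iff)
  define M2 where "M2 = M1 - {{ww (j+2), ww j}, {uu (j+2), ww (j+1)}} \<union> {{ww (j+2), uu (j+2)}, {ww j, ww (j+1)}}"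
  have s2: "swap E M1 M2"
    by (rule swapI[of "ww (j+2)" "ww j" "uu (j+2)" "ww (j+1)"])
       (use h4 d6 d4 d8 g4i[of "j+1" "j"] d7 m4 M0E[OF e0] h1 M1_def M2_def in \<open>auto simp: insert_commute\<close>)
  have "M2 \<inter> M0 \<noteq> {}" using e0 M2_def by auto
  then show goal using s1 s2 by (meson rtranclp.rtrancl_into_rtrancl rtranclp.rtrancl_refl)
qed

lemma CD: assumes h1: "{ww j, uu (j+3)} \<in> E" and h2: "{uu (j+1), ww (j+2)} \<in> E"
  and h4: "ww j \<noteq> ww (j+2)" and h5: "uu (j+1) \<noteq> uu (j+3)"
  shows goal
proof -
  have d1: "uu (j+1) \<noteq> ww (j+2)" using g5i[of "j+2" "j+1"] by simp
  have d2: "ww j \<noteq> uu (j+3)"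
  proof
    assume "ww j = uu (j+3)"
    then have "p (ww j) = p (uu (j+3))" by simp
    moreover have "p (uu (j+3)) = ww (j+2)" using pui[of "j+3" "j+2"] by simp
    ultimately show False using pw d1 by metis
  qed
  have d3: "ww (j+2) \<noteq> uu (j+3)" using g2i[of "j+3" "j+2"] by simp
  have d4: "ww (j+1) \<noteq> ww (j+2)" using g4i[of "j+2" "j+1"] by simp
  have d5: "ww (j+1) \<noteq> uu (j+3)" using g6i[of "j+3" "j+1"] by simp
  have d6: "uu (j+2) \<noteq> ww (j+2)" using g1[of "j+2"] by simp
  have d7: "ww (j+1) \<noteq> uu (j+2)" using g2i[of "j+2" "j+1"] by simp
  have d9: "uu (j+1) \<noteq> uu (j+2)" using g3i[of "j+2" "j+1"] by simp
  have m1: "{uu (j+1), ww j} \<in> M" using eMi'[of "j+1" "j"] by simp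
  have m2: "{ww (j+2), uu (j+3)} \<in> M" using eMi[of "j+3" "j+2"] by simp
  have m3: "{ww (j+1), uu (j+2)} \<in> M" using eMi[of "j+2" "j+1"] by simp
  have e1: "{ww (j+1), uu (j+1)} \<in> M0" using eM0'[of "j+1"] by simp
  have e2: "{uu (j+2), ww (j+2)} \<in> M0" using eM0[of "j+2"] by simp
  define M1 where "M1 = M - {{ww (j+2), uu (j+3)}, {uu (j+1), ww j}} \<union> {{ww (j+2), uu (j+1)}, {uu (j+3), ww j}}"
  have s1: "swap E M M1"
    by (rule swapI[of "ww (j+2)" "uu (j+3)" "uu (j+1)" "ww j"])
       (use g2i[of "j+1" "j"] h4 d2 d1 h5 d3 m1 m2 h1 h2 M1_def in \<open>auto simp: insert_commute\<close>)
  have m4: "{ww (j+1), uu (j+2)} \<in> M1" unfolding M1_def using m3 g4i[of "j+1" "j"] g1[of "j+1"] d4 d5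
    by (auto simp: doubleton_eq_iff)
  have m5: "{uu (j+1), ww (j+2)} \<in> M1" unfolding M1_def by (auto simp: insert_commute)
  define M2 where "M2 = M1 - {{ww (j+1), uu (j+2)}, {uu (j+1), ww (j+2)}} \<union> {{ww (j+1), uu (j+1)}, {uu (j+2), ww (j+2)}}"
  have s2: "swap E M1 M2"
    by (rule swapI[of "ww (j+1)" "uu (j+2)" "uu (j+1)" "ww (j+2)"])
       (use d7 g1[of "j+1"] d4 d9 d6 d1 m4 m5 M0E[OF e1] M0E[OF e2] M2_def in auto)
  have "M2 \<inter> M0 \<noteq> {}" using e1 M2_def by auto
  then show goal using s1 s2 by (meson rtranclp.rtrancl_into_rtrancl rtranclp.rtrancl_refl)
qed

lemma CF: assumes h1: "{ww j, ww (j+3)} \<in> E" and h2: "{uu (j+1), uu (j+4)} \<in> E"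
  and h3: "{ww j, ww (j+2)} \<in> E"
  and h4: "ww j \<noteq> ww (j+3)" and h5: "uu (j+1) \<noteq> uu (j+4)" and h6: "uu (j+1) \<noteq> ww (j+3)"
  and h7: "ww j \<noteq> ww (j+2)" and h8: "ww j \<noteq> uu (j+3)"
  shows goal
proof -
  have d2: "ww j \<noteq> uu (j+4)"
  proof
    assume "ww j = uu (j+4)"
    then have "p (ww j) = p (uu (j+4))" by simp
    moreover have "p (uu (j+4)) = ww (j+3)" using pui[of "j+4" "j+3"] by simp
    ultimately show False using pw h6 by metis
  qed
  have d3: "ww (j+3) \<noteq> uu (j+4)" using g2i[of "j+4" "j+3"] by simp
  have d4: "ww (j+2) \<noteq> ww (j+3)" using g4i[of "j+3" "j+2"] by simp
  have d5: "ww (j+2) \<noteq> uu (j+4)" using g6i[of "j+4" "j+2"] by simp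
  have d6: "uu (j+3) \<noteq> ww (j+3)" using g1[of "j+3"] by simp
  have d7: "ww (j+2) \<noteq> uu (j+3)" using g2i[of "j+3" "j+2"] by simp
  have d8: "uu (j+1) \<noteq> ww (j+2)" using g5i[of "j+2" "j+1"] by simp
  have m1: "{ww j, uu (j+1)} \<in> M" using eMi[of "j+1" "j"] by simp
  have m2: "{ww (j+3), uu (j+4)} \<in> M" using eMi[of "j+4" "j+3"] by simp
  have m3: "{uu (j+3), ww (j+2)} \<in> M" using eMi'[of "j+3" "j+2"] by simp
  have e3: "{ww (j+3), uu (j+3)} \<in> M0" using eM0'[of "j+3"] by simp
  define M1 where "M1 = M - {{ww j, uu (j+1)}, {ww (j+3), uu (j+4)}} \<union> {{ww j, ww (j+3)}, {uu (j+1), uu (j+4)}}"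
  have s1: "swap E M M1"
    by (rule swapI[of "ww j" "uu (j+1)" "ww (j+3)" "uu (j+4)"])
       (use g2i[of "j+1" "j"] h4 d2 h6 h5 d3 m1 m2 h1 h2 M1_def in auto)
  have m4: "{uu (j+3), ww (j+2)} \<in> M1" unfolding M1_def using m3 h7 d8 d4 d5
    by (auto simp: doubleton_eq_iff)
  define M2 where "M2 = M1 - {{ww (j+3), ww j}, {uu (j+3), ww (j+2)}} \<union> {{ww (j+3), uu (j+3)}, {ww j, ww (j+2)}}"
  have s2: "swap E M1 M2"
    by (rule swapI[of "ww (j+3)" "ww j" "uu (j+3)" "ww (j+2)"])
       (use h4 d6 d4 h8 h7 d7 m4 M0E[OF e3] h3 M1_def M2_def in \<open>auto simp: insert_commute\<close>)
  have "M2 \<inter> M0 \<noteq> {}" using e3 M2_def by auto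
  then show goal using s1 s2 by (meson rtranclp.rtrancl_into_rtrancl rtranclp.rtrancl_refl)
qed


lemma Pu: assumes "uu a \<noteq> uu b" "uu a \<noteq> ww b" "ww a \<noteq> uu b" "ww a \<noteq> ww b"
  shows "({uu a, uu b} \<in> E \<and> {ww a, ww b} \<in> E) \<or> ({uu a, ww b} \<in> E \<and> {ww a, uu b} \<in> E)"
  using PPM0 eM0[of a] eM0[of b] assms unfolding PP_def by blast

lemma D2: assumes "i = j+2" "{ww j, uu i} \<notin> E"
  shows "uu j \<noteq> uu i \<and> uu j \<noteq> ww i \<and> ww j \<noteq> uu i \<and> ww j \<noteq> ww i"
proof -
  have a: "uu j \<noteq> uu i" using assms(2) M0E[OF eM0'[of j]] by auto
  have b: "ww j \<noteq> uu i" using g6i assms(1) by blast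
  have c: "ww j \<noteq> ww i" using a qw by metis
  have d: "uu j \<noteq> ww i" using b qw qu by metis
  show ?thesis using a b c d by blast
qed

lemma key: goal
proof -
  consider (A0) "{ww 0, uu 2} \<in> E" | (A1) "{ww 1, uu 3} \<in> E" | (A2) "{ww 2, uu 4} \<in> E"
    | (A3) "{ww 3, uu 5} \<in> E"
    | (nA) "{ww 0, uu 2} \<notin> E" "{ww 1, uu 3} \<notin> E" "{ww 2, uu 4} \<notin> E" "{ww 3, uu 5} \<notin> E"
    by blast
  then show goal
  proof cases
    case A0 then show ?thesis using CA[of 0] by (simp add: eval_nat_numeral)
  next
    case A1 then show ?thesis using CA[of 1] by (simp add: eval_nat_numeral)
  next
    case A2 then show ?thesis using CA[of 2] by (simp add: eval_nat_numeral)
  next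
    case A3 then show ?thesis using CA[of 3] by (simp add: eval_nat_numeral)
  next
    case nA
    have d02: "uu 0 \<noteq> uu 2 \<and> uu 0 \<noteq> ww 2 \<and> ww 0 \<noteq> uu 2 \<and> ww 0 \<noteq> ww 2" using D2[of 2 0] nA by simp
    have d13: "uu 1 \<noteq> uu 3 \<and> uu 1 \<noteq> ww 3 \<and> ww 1 \<noteq> uu 3 \<and> ww 1 \<noteq> ww 3" using D2[of 3 1] nA by simp
    have d24: "uu 2 \<noteq> uu 4 \<and> uu 2 \<noteq> ww 4 \<and> ww 2 \<noteq> uu 4 \<and> ww 2 \<noteq> ww 4" using D2[of 4 2] nA by simp
    have d35: "uu 3 \<noteq> uu 5 \<and> uu 3 \<noteq> ww 5 \<and> ww 3 \<noteq> uu 5 \<and> ww 3 \<noteq> ww 5" using D2[of 5 3] nA by simp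
    have p02: "{uu 0, uu 2} \<in> E \<and> {ww 0, ww 2} \<in> E" using Pu[of 0 2] d02 nA by blast
    have p13: "{uu 1, uu 3} \<in> E \<and> {ww 1, ww 3} \<in> E" using Pu[of 1 3] d13 nA by blast
    have p24: "{uu 2, uu 4} \<in> E \<and> {ww 2, ww 4} \<in> E" using Pu[of 2 4] d24 nA by blast
    have p35: "{uu 3, uu 5} \<in> E \<and> {ww 3, ww 5} \<in> E" using Pu[of 3 5] d35 nA by blast
    consider (B0) "{ww 0, ww 1} \<in> E" | (B1) "{ww 1, ww 2} \<in> E" | (B2) "{ww 2, ww 3} \<in> E"
      | (nB) "{ww 0, ww 1} \<notin> E" "{ww 1, ww 2} \<notin> E" "{ww 2, ww 3} \<notin> E" by blast
    then show ?thesis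
    proof cases
      case B0 then show ?thesis using CB[of 0] p02 p13 d02 d13 by (simp add: eval_nat_numeral)
    next
      case B1 then show ?thesis using CB[of 1] p13 p24 d13 d24 by (simp add: eval_nat_numeral)
    next
      case B2 then show ?thesis using CB[of 2] p24 p35 d24 d35 by (simp add: eval_nat_numeral)
    next
      case nB
      have c12: "{uu 1, ww 2} \<in> E"
        using Pu[of 1 2] nB g3i[of 2 1] g5i[of 2 1] g2i[of 2 1] g4i[of 2 1] by auto
      have c23: "{uu 2, ww 3} \<in> E"
        using Pu[of 2 3] nB g3i[of 3 2] g5i[of 3 2] g2i[of 3 2] g4i[of 3 2] by auto
      consider (D0) "{ww 0, uu 3} \<in> E" | (D1) "{ww 1, uu 4} \<in> E"
        | (nD) "{ww 0, uu 3} \<notin> E" "{ww 1, uu 4} \<notin> E" by blast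
      then show ?thesis
      proof cases
        case D0 then show ?thesis using CD[of 0] c12 d02 d13 by (simp add: eval_nat_numeral)
      next
        case D1 then show ?thesis using CD[of 1] c23 d13 d24 by (simp add: eval_nat_numeral)
      next
        case nD
        have x1: "uu 1 \<noteq> ww 2" using g5i[of 2 1] by simp
        have x2: "uu 2 \<noteq> ww 3" using g5i[of 3 2] by simp
        have pu1: "p (uu 1) = ww 0" using pui[of 1 0] by simp
        have pu3: "p (uu 3) = ww 2" using pui[of 3 2] by simp
        have pu4: "p (uu 4) = ww 3" using pui[of 4 3] by simp
        have pu2: "p (uu 2) = ww 1" using pui[of 2 1] by simp
        have pw0: "p (ww 0) = uu 1" using pw[of 0] by (simp add: eval_nat_numeral)
        have pw1: "p (ww 1) = uu 2" using pw[of 1] by (simp add: eval_nat_numeral)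
        have y1: "ww 0 \<noteq> uu 3" using x1 pu3 pw0 by metis
        have y2: "uu 0 \<noteq> uu 3"
        proof
          assume "uu 0 = uu 3"
          then have "ww 0 = ww 3" using qu by metis
          then show False using nB p02 by (simp add: insert_commute)
        qed
        have y3: "ww 0 \<noteq> ww 3" using y2 qw by metis
        have y4: "uu 0 \<noteq> ww 3" using y1 qw qu by metis
        have z1: "ww 1 \<noteq> uu 4" using x2 pu4 pw1 by metis
        have z2: "uu 1 \<noteq> uu 4"
        proof
          assume "uu 1 = uu 4"
          then have "ww 1 = ww 4" using qu by metis
          then show False using nB p24 by (simp add: insert_commute)
        qed
        have z3: "ww 1 \<noteq> ww 4" using z2 qw by metis
        have z4: "uu 1 \<noteq> ww 4" using z1 qw qu by metis
        have p03: "{uu 0, uu 3} \<in> E \<and> {ww 0, ww 3} \<in> E" using Pu[of 0 3] y1 y2 y3 y4 nD by blast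
        have p14: "{uu 1, uu 4} \<in> E \<and> {ww 1, ww 4} \<in> E" using Pu[of 1 4] z1 z2 z3 z4 nD by blast
        show ?thesis using CF[of 0] p03 p14 p02 y3 z2 d13 d02 y1 by (simp add: eval_nat_numeral)
      qed
    qed
  qed
qed

end



lemma PP_mono: "PP E M0 \<Longrightarrow> M0' \<subseteq> M0 \<Longrightarrow> PP E M0'"
  unfolding PP_def by blast

context G begin

lemma pm_restrict: assumes pm: "pm E W M" and e: "e \<in> M" shows "pm E (W - e) (M - {e})"
proof -
  have sub: "M - {e} \<subseteq> E" using pm unfolding pm_def by auto
  have disj: "x \<inter> e = {}" if "x \<in> M - {e}" for x
    using pm_unique[OF pm, of x e] that e by blast
  have inW: "\<forall>x\<in>M - {e}. x \<subseteq> W - e" using disj pm unfolding pm_def by blast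
  have un: "\<exists>!x. x \<in> M - {e} \<and> v \<in> x" if v: "v \<in> W - e" for v
  proof -
    obtain x where x: "x \<in> M" "v \<in> x" using pm v unfolding pm_def by blast
    have "x \<noteq> e" using x v by auto
    show ?thesis
    proof (rule ex1I[of _ x])
      show "x \<in> M - {e} \<and> v \<in> x" using x \<open>x \<noteq> e\<close> by blast
    next
      fix y assume "y \<in> M - {e} \<and> v \<in> y"
      then show "y = x" using pm_unique[OF pm, of y x v] x by blast
    qed
  qed
  show ?thesis unfolding pm_def using sub inW un by simp
qed

lemma pm_empty: "pm E {} M \<Longrightarrow> M = {}"
proof -
  assume a: "pm E {} M"
  { fix x assume x: "x \<in> M"
    then obtain a b where "a \<noteq> b" "x = {a,b}" using pm_edge[OF a] by blast
    then have False using a x unfolding pm_def by auto }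
  then show ?thesis by blast
qed

lemma conn: "finite W \<Longrightarrow> pm E W M \<Longrightarrow> pm E W M0 \<Longrightarrow> PP E M0 \<Longrightarrow> (swap E)\<^sup>*\<^sup>* M M0"
proof (induction "card W" arbitrary: W M M0 rule: less_induct)
  case less
  have common: "(swap E)\<^sup>*\<^sup>* M' M0" if pmM': "pm E W M'" and ne: "M' \<inter> M0 \<noteq> {}" for M'
  proof -
    obtain e where e: "e \<in> M'" "e \<in> M0" using ne by blast
    obtain a b where ab: "a \<noteq> b" "e = {a,b}" using pm_edge[OF pmM' e(1)] by blast
    have eW: "e \<subseteq> W" using pmM' e(1) unfolding pm_def by auto
    have lt: "card (W - e) < card W" using eW ab less.prems(1)
      by (intro psubset_card_mono) auto
    have r1: "pm E (W - e) (M' - {e})" using pm_restrict[OF pmM' e(1)] .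
    have r2: "pm E (W - e) (M0 - {e})" using pm_restrict[OF less.prems(3) e(2)] .
    have "PP E (M0 - {e})" using PP_mono[OF less.prems(4)] by blast
    then have "(swap E)\<^sup>*\<^sup>* (M' - {e}) (M0 - {e})"
      using less.hyps[OF lt _ r1 r2] less.prems(1) by blast
    moreover have "\<forall>x\<in>M' - {e}. x \<inter> e = {}" using r1 unfolding pm_def by blast
    moreover have "e \<noteq> {}" using ab by auto
    ultimately have "(swap E)\<^sup>*\<^sup>* (insert e (M' - {e})) (insert e (M0 - {e}))"
      by (rule swaps_lift)
    then show ?thesis using e by (simp add: insert_absorb)
  qed
  show ?case
  proof (cases "M \<inter> M0 = {}")
    case False then show ?thesis using common less.prems(2) by blast
  next
    case True
    show ?thesis
    proof (cases "W = {}")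
      case True
      then show ?thesis using pm_empty less.prems by auto
    next
      case False
      then obtain u0 where u0: "u0 \<in> W" by blast
      interpret K E W M M0 u0
        using less.prems True u0 by unfold_locales auto
      obtain M' where M': "(swap E)\<^sup>*\<^sup>* M M'" "M' \<inter> M0 \<noteq> {}" using key by blast
      have "pm E W M'" using swaps_pm[OF M'(1) less.prems(2)] .
      then show ?thesis using common M' by (meson rtranclp_trans)
    qed
  qed
qed

end




context GV begin

lemma ivt: assumes "(swap E)\<^sup>*\<^sup>* A B" "pm E V A"
  shows "fn A \<le> k \<Longrightarrow> k \<le> fn B \<Longrightarrow> \<exists>C. (swap E)\<^sup>*\<^sup>* A C \<and> fn C = k"
  using assms(1)
proof (induction arbitrary: k rule: rtranclp_induct)
  case base then show ?case by auto
next
  case (step y z)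
  have pmy: "pm E V y" using swaps_pm[OF step.hyps(1) assms(2)] .
  have "fn z \<le> fn y + 1" using swap_fn[OF pmy step.hyps(2)] .
  show ?case
  proof (cases "k \<le> fn y")
    case True then show ?thesis using step.IH step.prems(1) by blast
  next
    case False
    then have "k = fn z" using step.prems \<open>fn z \<le> fn y + 1\<close> by linarith
    have "(swap E)\<^sup>*\<^sup>* A z" using step.hyps by (rule rtranclp.rtrancl_into_rtrancl)
    then show ?thesis using \<open>k = fn z\<close> by blast
  qed
qed

lemma card_pm: assumes "pm E V M" shows "card V = 2 * card M"
proof -
  have U: "\<Union>M = V" using assms unfolding pm_def by blast
  have pw: "pairwise disjnt M" unfolding pairwise_def disjnt_def
    using pm_unique[OF assms] by blast
  have fin: "\<And>A. A \<in> M \<Longrightarrow> finite A" using assms finV unfolding pm_def by (meson rev_finite_subset)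
  have "card (\<Union>M) = sum card M" by (rule card_Union_disjoint[OF pw fin])
  also have "\<dots> = sum (\<lambda>_. 2) M" using assms E2 unfolding pm_def by (intro sum.cong) auto
  finally show ?thesis using U by simp
qed

lemma derive_PP: assumes pm0: "pm E V M0" and f: "fn M0 + 1 = card M0" shows "PP E M0"
  unfolding PP_def
proof (intro allI impI)
  fix a b c d assume ab: "{a,b} \<in> M0" and cd: "{c,d} \<in> M0" and
    d: "a \<noteq> c" "a \<noteq> d" "b \<noteq> c" "b \<noteq> d"
  have abne: "a \<noteq> b" using pm_edge[OF pm0 ab] by (metis doubleton_eq_iff)
  have cdne: "c \<noteq> d" using pm_edge[OF pm0 cd] by (metis doubleton_eq_iff)
  have ef: "{a,b} \<noteq> {c,d}" using d by (auto simp: doubleton_eq_iff)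
  define S where "S = M0 - {{a,b},{c,d}}"
  have fin0: "finite M0" using finM[OF pm0] .
  have cS: "card S = card M0 - 2" unfolding S_def using ab cd ef fin0
    by (simp add: card_Diff_subset)
  have ge2: "card M0 \<ge> 2"
  proof -
    have "{{a,b},{c,d}} \<subseteq> M0" using ab cd by auto
    then have "card {{a,b},{c,d}} \<le> card M0" using fin0 card_mono by blast
    then show ?thesis using ef by simp
  qed
  have "\<not> forcing_set V E M0 S"
  proof
    assume "forcing_set V E M0 S"
    then have "fn M0 \<le> card S" using fn_le[OF pm0] by blast
    then show False using cS f ge2 by linarith
  qed
  moreover have "S \<subseteq> M0" unfolding S_def by auto
  ultimately obtain N where N: "perfect_matching V E N" "S \<subseteq> N" "N \<noteq> M0"
    unfolding forcing_set_def by blast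
  have pmN: "pm E V N" using N(1) pm_iff[OF Esub] by blast
  let ?Q = "{a,b,c,d}"
  have QV: "?Q \<subseteq> V" using pm_in[OF pm0 ab] pm_in[OF pm0 cd] by auto
  have loc: "partner N v \<in> ?Q" if v: "v \<in> ?Q" for v
  proof (rule ccontr)
    define x where "x = partner N v"
    assume nx: "partner N v \<notin> ?Q"
    have vx: "{v,x} \<in> N" unfolding x_def using pm_partner(1)[OF pmN] v QV by auto
    have xV: "x \<in> V" using pm_in[OF pmN vx] by simp
    define g where "g = {x, partner M0 x}"
    have g: "g \<in> M0" unfolding g_def using pm_partner(1)[OF pm0 xV] .
    have "g \<noteq> {a,b}" "g \<noteq> {c,d}" using nx unfolding g_def x_def by auto
    then have "g \<in> N" using g N(2) unfolding S_def by auto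
    then have "g = {v,x}" using pm_unique[OF pmN _ vx, of g x] unfolding g_def by auto
    then have vg: "v \<in> g" by auto
    have "g = {a,b} \<or> g = {c,d}"
      using v pm_unique[OF pm0 g ab, of v] pm_unique[OF pm0 g cd, of v] vg by auto
    then show False using \<open>g \<noteq> {a,b}\<close> \<open>g \<noteq> {c,d}\<close> by blast
  qed
  have aV: "a \<in> V" "b \<in> V" "c \<in> V" "d \<in> V" using QV by auto
  have pN: "\<And>v. v \<in> V \<Longrightarrow> {v, partner N v} \<in> N" using pm_partner(1)[OF pmN] by blast
  have pNn: "\<And>v. v \<in> V \<Longrightarrow> partner N v \<noteq> v" using pm_partner(2)[OF pmN] by blast
  have pNi: "\<And>v. v \<in> V \<Longrightarrow> partner N (partner N v) = v" using pm_partner(4)[OF pmN] by blast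
  have NE: "N \<subseteq> E" using pmN unfolding pm_def by auto
  have la: "partner N a \<in> ?Q" "partner N b \<in> ?Q" "partner N c \<in> ?Q" using loc by auto
  consider "partner N a = b" | "partner N a = c" | "partner N a = d"
    using la(1) pNn[OF aV(1)] by auto
  then show "({a,c}\<in>E \<and> {b,d}\<in>E) \<or> ({a,d}\<in>E \<and> {b,c}\<in>E)"
  proof cases
    case 1
    have pb: "partner N b = a" using 1 pNi aV by metis
    have "partner N c = d"
    proof -
      have "partner N c \<noteq> a" using 1 pNi aV d by metis
      moreover have "partner N c \<noteq> b" using pb pNi aV d by metis
      ultimately show ?thesis using la(3) pNn[OF aV(3)] by auto
    qed
    then have "{a,b} \<in> N" "{c,d} \<in> N" using pN aV 1 by metis+
    then have "M0 \<subseteq> N" using N(2) unfolding S_def by auto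
    then have "N = M0" using pm_sub_eq[OF pm0 pmN] by blast
    then show ?thesis using N(3) by blast
  next
    case 2
    have pc: "partner N c = a" using 2 pNi aV by metis
    have "partner N b = d"
    proof -
      have "partner N b \<noteq> a" using 2 pNi aV d by metis
      moreover have "partner N b \<noteq> c" using pc pNi aV abne by metis
      ultimately show ?thesis using la(2) pNn[OF aV(2)] by auto
    qed
    then have "{a,c} \<in> N" "{b,d} \<in> N" using pN aV 2 by metis+
    then show ?thesis using NE by blast
  next
    case 3
    have pd: "partner N d = a" using 3 pNi aV by metis
    have "partner N b = c"
    proof -
      have "partner N b \<noteq> a" using 3 pNi aV d by metis
      moreover have "partner N b \<noteq> d" using pd pNi aV abne by metis
      ultimately show ?thesis using la(2) pNn[OF aV(2)] by auto
    qed
    then have "{a,d} \<in> N" "{b,c} \<in> N" using pN aV 3 by metis+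
    then show ?thesis using NE by blast
  qed
qed

end

theorem theorem5p9:
  fixes V :: "'a set" and E :: "'a set set" and n :: nat
  assumes "simple_graph V E"
    and "n \<ge> 1"
    and "card V = 2 * n"
    and "\<exists>M. perfect_matching V E M"
    and "max_forcing_number V E = n - 1"
  shows "forcing_spectrum V E = {min_forcing_number V E .. n - 1}"
proof -
  interpret GV E V using assms(1) unfolding simple_graph_def by unfold_locales auto
  let ?P = "{M. perfect_matching V E M}"
  have finP: "finite ?P"
  proof -
    have "?P \<subseteq> Pow E" unfolding perfect_matching_def by auto
    moreover have "finite E" using finV Esub by (meson Pow_iff finite_Pow_iff rev_finite_subset subsetI)
    ultimately show ?thesis by (meson finite_Pow_iff rev_finite_subset)
  qed
  have sp: "forcing_spectrum V E = fn ` ?P" unfolding forcing_spectrum_def by simp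
  have finS: "finite (forcing_spectrum V E)" using sp finP by simp
  have neS: "forcing_spectrum V E \<noteq> {}" using sp assms(4) by auto
  obtain M1 where M1: "perfect_matching V E M1" "fn M1 = min_forcing_number V E"
    using Min_in[OF finS neS] sp unfolding min_forcing_number_def by auto
  obtain M0 where M0: "perfect_matching V E M0" "fn M0 = n - 1"
    using Max_in[OF finS neS] sp assms(5) unfolding max_forcing_number_def by auto
  have pm1: "pm E V M1" using M1(1) pm_iff[OF Esub] by blast
  have pm0: "pm E V M0" using M0(1) pm_iff[OF Esub] by blast
  have "card M0 = n" using card_pm[OF pm0] assms(3) by simp
  then have "fn M0 + 1 = card M0" using M0(2) assms(2) by simp
  then have PP0: "PP E M0" using derive_PP[OF pm0] by blast
  have path: "(swap E)\<^sup>*\<^sup>* M1 M0" using conn[OF finV pm1 pm0 PP0] .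
  show ?thesis
  proof
    show "forcing_spectrum V E \<subseteq> {min_forcing_number V E .. n - 1}"
    proof
      fix x assume x: "x \<in> forcing_spectrum V E"
      have "min_forcing_number V E \<le> x" unfolding min_forcing_number_def using Min_le[OF finS x] .
      moreover have "x \<le> n - 1" using Max_ge[OF finS x] assms(5) unfolding max_forcing_number_def by simp
      ultimately show "x \<in> {min_forcing_number V E .. n - 1}" by simp
    qed
  next
    show "{min_forcing_number V E .. n - 1} \<subseteq> forcing_spectrum V E"
    proof
      fix k assume k: "k \<in> {min_forcing_number V E .. n - 1}"
      obtain C where C: "(swap E)\<^sup>*\<^sup>* M1 C" "fn C = k"
        using ivt[OF path pm1, of k] k M1(2) M0(2) by auto
      have "pm E V C" using swaps_pm[OF C(1) pm1] .
      then have "perfect_matching V E C" using pm_iff[OF Esub] by blast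
      then show "k \<in> forcing_spectrum V E" using sp C(2) by auto
    qed
  qed
qed



end
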